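(* Let $L>0,\alpha>0$ and let $\{b_n\}\subset\Lambda(\alpha)$ converge weak-$*$ to some $\bar b\in\overline{\Lambda}(\alpha)$. Let $\eta$ be a continuous function on $\mathbb R$ with $\sum_{k=-\infty}^{\infty}\max_{0\le x\le L}|\eta(x+kL)|<\infty$. Then $\eta$ is $\bar b$-integrable on $\mathbb R$, $\lim_{n\to\infty}\int_{\mathbb R}b_n(x)\eta(x)dx=\int_{\mathbb R}\bar b(x)\eta(x)dx$, and $\int_{\mathbb R}\bar b(x)|\eta(x)|dx\le\alpha L\sum_{k=-\infty}^\infty\max_{0\le x\le L}|\eta(x+kL)|$.
   Context: $\Lambda(\alpha)$: $b\in C^1(\mathbb R)$, $b\ge0$, $b(x+L)=b(x)$, $\int_0^Lb=\alpha L$. $b_n\to\bar b$ weak-$*$ means $\int b_n\eta\,dx\to\langle\bar b,\eta\rangle$ for all $\eta\in C_0^\infty(\mathbb R)$; $\overline{\Lambda}(\alpha)$ is the set of such limits, which are nonnegative Borel measures, and $\int\bar b(x)\eta(x)dx$ denotes $\int\eta\,d\bar b$. *)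

theory Defs
  imports "HOL-Analysis.Analysis"
begin

definition C1_fun :: "(real \<Rightarrow> real) \<Rightarrow> bool" where
  "C1_fun b \<longleftrightarrow> (\<exists>b'. continuous_on UNIV b' \<and> (\<forall>x. (b has_real_derivative b' x) (at x)))"

definition Lambda :: "real \<Rightarrow> real \<Rightarrow> (real \<Rightarrow> real) set" where
  "Lambda L \<alpha> = {b. C1_fun b \<and> (\<forall>x. 0 \<le> b x) \<and> (\<forall>x. b (x + L) = b x)
                      \<and> integral {0..L} b = \<alpha> * L}"

definition test_fun :: "(real \<Rightarrow> real) \<Rightarrow> bool" where
  "test_fun \<eta> \<longleftrightarrow> (\<forall>k x. ((deriv ^^ k) \<eta>) differentiable (at x))
                     \<and> (\<exists>a c. \<forall>x. x \<notin> {a..c} \<longrightarrow> \<eta> x = 0)"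

definition weak_star_conv :: "(nat \<Rightarrow> real \<Rightarrow> real) \<Rightarrow> real measure \<Rightarrow> bool" where
  "weak_star_conv b M \<longleftrightarrow>
     (\<forall>\<eta>. test_fun \<eta> \<longrightarrow> integrable M \<eta> \<and>
        (\<lambda>n. LINT x|lborel. b n x * \<eta> x) \<longlonglongrightarrow> (LINT x|M. \<eta> x))"

definition Lambda_bar :: "real \<Rightarrow> real \<Rightarrow> real measure set" where
  "Lambda_bar L \<alpha> = {M. sets M = sets borel \<and>
      (\<exists>b. (\<forall>n. b n \<in> Lambda L \<alpha>) \<and> weak_star_conv b M)}"

end

theory Submission
  imports Defs
begin


definition smooth :: "(real \<Rightarrow> real) \<Rightarrow> bool" where
  "smooth f \<longleftrightarrow> (\<forall>k x. (deriv ^^ k) f differentiable (at x))"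

lemma smooth_coinduct:
  assumes "P f" and step: "\<And>g. P g \<Longrightarrow> (\<forall>x. g differentiable (at x)) \<and> P (deriv g)"
  shows "smooth f"
proof -
  have "\<forall>g. P g \<longrightarrow> (deriv ^^ k) g differentiable (at x)" for k x
  proof (induction k)
    case 0 then show ?case using step by simp
  next
    case (Suc k)
    show ?case
    proof (intro allI impI)
      fix g assume "P g"
      then have "P (deriv g)" using step by blast
      then have "(deriv ^^ k) (deriv g) differentiable (at x)" using Suc by blast
      then show "(deriv ^^ Suc k) g differentiable (at x)"
        by (simp only: funpow_Suc_right comp_apply)
    qed
  qed
  then show ?thesis using assms(1) unfolding smooth_def by blast
qed

lemma smooth_differentiable: "smooth f \<Longrightarrow> f differentiable (at x)"
  unfolding smooth_def by (metis funpow_0)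

lemma smooth_deriv: "smooth f \<Longrightarrow> smooth (deriv f)"
  unfolding smooth_def by (metis comp_apply funpow_Suc_right)

lemma smooth_DERIV: "smooth f \<Longrightarrow> (f has_real_derivative deriv f x) (at x)"
  using smooth_differentiable DERIV_deriv_iff_real_differentiable by blast

definition sp :: "((real \<Rightarrow> real) \<times> (real \<Rightarrow> real)) list \<Rightarrow> real \<Rightarrow> real" where
  "sp ps = (\<lambda>x. sum_list (map (\<lambda>(f,g). f x * g x) ps))"

definition Dps :: "((real \<Rightarrow> real) \<times> (real \<Rightarrow> real)) list \<Rightarrow> ((real \<Rightarrow> real) \<times> (real \<Rightarrow> real)) list" where
  "Dps ps = concat (map (\<lambda>(f,g). [(deriv f, g), (f, deriv g)]) ps)"

lemma sp_DERIV:
  assumes "\<forall>(f,g)\<in>set ps. smooth f \<and> smooth g"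
  shows "(sp ps has_real_derivative sp (Dps ps) x) (at x)"
  using assms
proof (induction ps)
  case Nil then show ?case by (simp add: sp_def Dps_def)
next
  case (Cons a ps)
  obtain f g where a: "a = (f,g)" by (cases a)
  have sf: "smooth f" "smooth g" using Cons.prems a by auto
  have IH: "(sp ps has_real_derivative sp (Dps ps) x) (at x)" using Cons by auto
  have e1: "sp (a # ps) = (\<lambda>x. f x * g x + sp ps x)" by (simp add: sp_def a)
  have e2: "sp (Dps (a#ps)) x = deriv f x * g x + f x * deriv g x + sp (Dps ps) x"
    by (simp add: sp_def Dps_def a)
  show ?case unfolding e1 e2
    using DERIV_add[OF DERIV_mult'[OF smooth_DERIV[OF sf(1)] smooth_DERIV[OF sf(2)]] IH]
    by (simp add: algebra_simps)
qed

lemma smooth_sp: "\<forall>(f,g)\<in>set ps. smooth f \<and> smooth g \<Longrightarrow> smooth (sp ps)"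
proof (rule smooth_coinduct[where P="\<lambda>h. \<exists>ps. (\<forall>(f,g)\<in>set ps. smooth f \<and> smooth g) \<and> h = sp ps"])
  fix h assume "\<exists>ps. (\<forall>(f,g)\<in>set ps. smooth f \<and> smooth g) \<and> h = sp ps"
  then obtain ps where ps: "\<forall>(f,g)\<in>set ps. smooth f \<and> smooth g" "h = sp ps" by blast
  have d: "(sp ps has_real_derivative sp (Dps ps) x) (at x)" for x by (rule sp_DERIV[OF ps(1)])
  have "deriv h = sp (Dps ps)" using d ps(2) DERIV_imp_deriv by blast
  moreover have "\<forall>(f,g)\<in>set (Dps ps). smooth f \<and> smooth g"
    using ps(1) by (auto simp: Dps_def smooth_deriv)
  moreover have "\<forall>x. h differentiable (at x)" using d ps(2) real_differentiable_def by blast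
  ultimately show "(\<forall>x. h differentiable (at x)) \<and> (\<exists>ps. (\<forall>(f,g)\<in>set ps. smooth f \<and> smooth g) \<and> deriv h = sp ps)"
    by blast
qed auto

lemma smooth_const: "smooth (\<lambda>x. c)"
  by (rule smooth_coinduct[where P="\<lambda>h. \<exists>c. h = (\<lambda>x. c)"]) auto

lemma smooth_mult: "smooth f \<Longrightarrow> smooth g \<Longrightarrow> smooth (\<lambda>x. f x * g x)"
  using smooth_sp[of "[(f,g)]"] by (simp add: sp_def)

lemma smooth_poly: "real_polynomial_function p \<Longrightarrow> smooth p"
proof (rule smooth_coinduct[where P=real_polynomial_function])
  fix g :: "real \<Rightarrow> real" assume "real_polynomial_function g"
  then obtain p' where p': "real_polynomial_function p'" "\<And>x. (g has_real_derivative (p' x)) (at x)"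
    using has_real_derivative_polynomial_function by blast
  then have "deriv g = p'" using DERIV_imp_deriv by blast
  then show "(\<forall>x. g differentiable (at x)) \<and> real_polynomial_function (deriv g)"
    using p' real_differentiable_def by blast
qed

lemma smooth_affine: "smooth f \<Longrightarrow> smooth (\<lambda>x. f (a * x + c))"
proof (rule smooth_coinduct[where P="\<lambda>h. \<exists>f d. smooth f \<and> h = (\<lambda>x. d * f (a * x + c))"])
  fix h assume "\<exists>f d. smooth f \<and> h = (\<lambda>x. d * f (a * x + c))"
  then obtain f d where fd: "smooth f" "h = (\<lambda>x. d * f (a * x + c))" by blast
  have D: "(h has_real_derivative (d * a) * deriv f (a * x + c)) (at x)" for x
    unfolding fd(2)
    by (rule derivative_eq_intros DERIV_chain2[OF smooth_DERIV[OF fd(1)]] | simp)+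
  then have "deriv h = (\<lambda>x. (d * a) * deriv f (a * x + c))" using DERIV_imp_deriv by blast
  then show "(\<forall>x. h differentiable (at x)) \<and> (\<exists>f d. smooth f \<and> deriv h = (\<lambda>x. d * f (a * x + c)))"
    using D real_differentiable_def smooth_deriv[OF fd(1)] by blast
next
  assume "smooth f" then show "\<exists>fa d. smooth fa \<and> (\<lambda>x. f (a * x + c)) = (\<lambda>x. d * fa (a * x + c))"
    by (intro exI[of _ f] exI[of _ 1]) auto
qed



lemma poly_exp_lim:
  "real_polynomial_function p \<Longrightarrow> \<forall>e>0. ((\<lambda>t. p t / exp (e*t)) \<longlongrightarrow> 0) at_top"
proof (induction p rule: real_polynomial_function.induct)
  case (linear f)
  then obtain c where f: "f = (\<lambda>x. x * c)" using real_bounded_linear by blast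
  show ?case
  proof (intro allI impI)
    fix e :: real assume e: "e > 0"
    have lin: "filterlim (\<lambda>t. e * t) at_top at_top"
      using e by (intro filterlim_tendsto_pos_mult_at_top[OF tendsto_const] filterlim_ident)
    have "((\<lambda>t. (e*t) ^ 1 / exp (e*t)) \<longlongrightarrow> 0) at_top"
      by (rule filterlim_compose[OF tendsto_power_div_exp_0 lin])
    then have "((\<lambda>t. (c/e) * ((e*t) ^ 1 / exp (e*t))) \<longlongrightarrow> (c/e) * 0) at_top"
      by (intro tendsto_mult tendsto_const)
    moreover have "(c/e) * ((e*t) ^ 1 / exp (e*t)) = f t / exp (e*t)" for t
      using e by (simp add: f)
    ultimately show "((\<lambda>t. f t / exp (e*t)) \<longlongrightarrow> 0) at_top" by simp
  qed
next
  case (const c)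
  show ?case
  proof (intro allI impI)
    fix e :: real assume e: "e > 0"
    have lin: "filterlim (\<lambda>t. e * t) at_top at_top"
      using e by (intro filterlim_tendsto_pos_mult_at_top[OF tendsto_const] filterlim_ident)
    have "filterlim (\<lambda>t. exp (e*t)) at_top at_top"
      by (rule filterlim_compose[OF exp_at_top lin])
    then show "((\<lambda>t. c / exp (e*t)) \<longlongrightarrow> 0) at_top"
      by (intro tendsto_divide_0[OF tendsto_const] filterlim_at_top_imp_at_infinity)
  qed
next
  case (add f g)
  show ?case
  proof (intro allI impI)
    fix e :: real assume e: "e > 0"
    have "((\<lambda>t. f t / exp (e*t) + g t / exp (e*t)) \<longlongrightarrow> 0 + 0) at_top"
      using add e by (intro tendsto_add) auto
    then show "((\<lambda>t. (f t + g t) / exp (e*t)) \<longlongrightarrow> 0) at_top"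
      by (simp add: add_divide_distrib)
  qed
next
  case (mult f g)
  show ?case
  proof (intro allI impI)
    fix e :: real assume e: "e > 0"
    have e2: "e/2 > 0" using e by simp
    have hf: "((\<lambda>t. f t / exp (e/2*t)) \<longlongrightarrow> 0) at_top" using mult e2 by blast
    have hg: "((\<lambda>t. g t / exp (e/2*t)) \<longlongrightarrow> 0) at_top" using mult e2 by blast
    have X: "((\<lambda>t. (f t / exp (e/2*t)) * (g t / exp (e/2*t))) \<longlongrightarrow> 0) at_top"
      using tendsto_mult[OF hf hg] by (simp only: mult_zero_left)
    have EQ: "(\<lambda>t. (f t / exp (e/2*t)) * (g t / exp (e/2*t))) = (\<lambda>t. (f t * g t) / exp (e*t))"
    proof (rule ext)
      fix t
      have "exp (e*t) = exp (e/2*t) * exp (e/2*t)" by (simp flip: exp_add)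
      then show "(f t / exp (e/2*t)) * (g t / exp (e/2*t)) = (f t * g t) / exp (e*t)"
        by (simp only: times_divide_times_eq)
    qed
    show "((\<lambda>t. (f t * g t) / exp (e*t)) \<longlongrightarrow> 0) at_top" using X unfolding EQ .
  qed
qed

lemma rpf_id: "real_polynomial_function (\<lambda>t::real. t)"
  by (rule real_polynomial_function.intros(1)) (rule bounded_linear_ident)

lemma rpf_q: "real_polynomial_function p \<Longrightarrow> real_polynomial_function p' \<Longrightarrow>
   real_polynomial_function (\<lambda>t::real. t*t*(p t - p' t))"
proof -
  assume a: "real_polynomial_function p" "real_polynomial_function p'"
  have "real_polynomial_function (\<lambda>t. (-1) * p' t)"
    by (rule real_polynomial_function.intros(4)[OF real_polynomial_function.intros(2) a(2)])
  then have "real_polynomial_function (\<lambda>t. p t + (-1) * p' t)"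
    by (rule real_polynomial_function.intros(3)[OF a(1)])
  moreover have "real_polynomial_function (\<lambda>t::real. t * t)"
    by (rule real_polynomial_function.intros(4)[OF rpf_id rpf_id])
  ultimately have "real_polynomial_function (\<lambda>t. t * t * (p t + (-1) * p' t))"
    by (rule real_polynomial_function.intros(4)[rotated])
  then show ?thesis by simp
qed

definition Fp :: "(real \<Rightarrow> real) \<Rightarrow> real \<Rightarrow> real" where
  "Fp p x = (if x > 0 then p (inverse x) * exp (- inverse x) else 0)"

lemma Fp_DERIV:
  assumes p: "real_polynomial_function p" and pd: "\<And>t. (p has_real_derivative p' t) (at t)"
  shows "(Fp p has_real_derivative Fp (\<lambda>t. t*t*(p t - p' t)) x) (at x)"
proof -
  consider "x > 0" | "x < 0" | "x = 0" by linarith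
  then show ?thesis
  proof cases
    case 1
    have i: "(inverse has_real_derivative - (inverse x ^ Suc (Suc 0))) (at x)"
      using DERIV_inverse[of x UNIV] 1 by simp
    have d1: "((\<lambda>y. p (inverse y)) has_real_derivative p' (inverse x) * (- (inverse x ^ Suc (Suc 0)))) (at x)"
      by (rule DERIV_chain2[OF pd i])
    have mi: "((\<lambda>y. - inverse y) has_real_derivative (inverse x ^ Suc (Suc 0))) (at x)"
      using DERIV_minus[OF i] by simp
    have d2: "((\<lambda>y. exp (- inverse y)) has_real_derivative exp (- inverse x) * (inverse x ^ Suc (Suc 0))) (at x)"
      by (rule DERIV_fun_exp[OF mi])
    have D: "((\<lambda>y. p (inverse y) * exp (- inverse y)) has_real_derivative
       p (inverse x) * (exp (- inverse x) * (inverse x ^ Suc (Suc 0))) + p' (inverse x) * (- (inverse x ^ Suc (Suc 0))) * exp (- inverse x)) (at x)"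
      by (rule DERIV_mult'[OF d1 d2])
    have eq: "p (inverse x) * (exp (- inverse x) * (inverse x ^ Suc (Suc 0))) + p' (inverse x) * (- (inverse x ^ Suc (Suc 0))) * exp (- inverse x)
          = Fp (\<lambda>t. t*t*(p t - p' t)) x"
      using 1 by (simp add: Fp_def algebra_simps power2_eq_square)
    show ?thesis
      by (rule has_field_derivative_transform_within_open[OF D[unfolded eq], of "{0<..}"])
         (use 1 in \<open>auto simp: Fp_def\<close>)
  next
    case 2
    have z: "((\<lambda>y. 0) has_real_derivative 0) (at x)" by simp
    have "Fp (\<lambda>t. t*t*(p t - p' t)) x = 0" using 2 by (simp add: Fp_def)
    moreover have "(Fp p has_real_derivative 0) (at x)"
      by (rule has_field_derivative_transform_within_open[OF z, of "{..<0}"])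
         (use 2 in \<open>auto simp: Fp_def\<close>)
    ultimately show ?thesis by simp
  next
    case 3
    have q: "real_polynomial_function (\<lambda>t. t * p t)"
      by (rule real_polynomial_function.intros(4)[OF rpf_id p])
    have L: "((\<lambda>t. t * p t / exp (1*t)) \<longlongrightarrow> 0) at_top"
      using poly_exp_lim[OF q] zero_less_one by blast
    have R: "((\<lambda>y. (Fp p y - Fp p 0) / (y - 0)) \<longlongrightarrow> 0) (at_right 0)"
    proof -
      have "((\<lambda>y. inverse y * p (inverse y) / exp (1 * inverse y)) \<longlongrightarrow> 0) (at_right 0)"
        by (rule filterlim_compose[OF L filterlim_inverse_at_top_right])
      moreover have "eventually (\<lambda>y. inverse y * p (inverse y) / exp (1 * inverse y)
                         = (Fp p y - Fp p 0) / (y - 0)) (at_right 0)"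
        unfolding eventually_at_filter
      proof (intro always_eventually allI impI)
        fix y :: real assume "y \<in> {0<..}"
        then have "y > 0" by simp
        then show "inverse y * p (inverse y) / exp (1 * inverse y) = (Fp p y - Fp p 0) / (y - 0)"
          by (simp add: Fp_def exp_minus field_simps)
      qed
      ultimately show ?thesis by (rule Lim_transform_eventually)
    qed
    have Le: "((\<lambda>y. (Fp p y - Fp p 0) / (y - 0)) \<longlongrightarrow> 0) (at_left 0)"
    proof -
      have "eventually (\<lambda>y. 0 = (Fp p y - Fp p 0) / (y - 0)) (at_left 0)"
        unfolding eventually_at_filter by (intro always_eventually) (simp add: Fp_def)
      then show ?thesis by (rule Lim_transform_eventually[rotated]) simp
    qed
    have "Fp (\<lambda>t. t*t*(p t - p' t)) x = 0" using 3 by (simp add: Fp_def)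
    moreover have "(Fp p has_real_derivative 0) (at 0)"
      unfolding has_field_derivative_iff by (rule filterlim_split_at[OF Le R])
    ultimately show ?thesis using 3 by simp
  qed
qed

lemma smooth_Fp: "real_polynomial_function p \<Longrightarrow> smooth (Fp p)"
proof (rule smooth_coinduct[where P="\<lambda>g. \<exists>p. real_polynomial_function p \<and> g = Fp p"])
  fix g assume "\<exists>p. real_polynomial_function p \<and> g = Fp p"
  then obtain p where p: "real_polynomial_function p" "g = Fp p" by blast
  then obtain p' where p': "real_polynomial_function p'" "\<And>x. (p has_real_derivative (p' x)) (at x)"
    using has_real_derivative_polynomial_function by blast
  have D: "(g has_real_derivative Fp (\<lambda>t. t*t*(p t - p' t)) x) (at x)" for x
    using Fp_DERIV[OF p(1) p'(2)] p(2) by simp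
  then have "deriv g = Fp (\<lambda>t. t*t*(p t - p' t))" using DERIV_imp_deriv by blast
  moreover have "real_polynomial_function (\<lambda>t. t*t*(p t - p' t))"
    by (rule rpf_q[OF p(1) p'(1)])
  ultimately show "(\<forall>x. g differentiable (at x)) \<and> (\<exists>p. real_polynomial_function p \<and> deriv g = Fp p)"
    using D real_differentiable_def by blast
qed auto

definition hflat :: "real \<Rightarrow> real" where "hflat = Fp (\<lambda>t. 1)"

lemma smooth_hflat: "smooth hflat"
  unfolding hflat_def by (rule smooth_Fp) (rule real_polynomial_function.intros(2))

lemma hflat_pos: "x > 0 \<Longrightarrow> hflat x > 0" and hflat_zero: "x \<le> 0 \<Longrightarrow> hflat x = 0"
  and hflat_nonneg: "hflat x \<ge> 0"
  by (auto simp: hflat_def Fp_def)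

lemma continuous_hflat: "continuous_on UNIV hflat"
  using smooth_differentiable[OF smooth_hflat]
  by (simp add: continuous_at_imp_continuous_on differentiable_imp_continuous_within)



lemma smooth_test_fun: "smooth f \<Longrightarrow> (\<And>x. x \<notin> {a..c} \<Longrightarrow> f x = 0) \<Longrightarrow> test_fun f"
  unfolding test_fun_def smooth_def by blast

definition bump :: "real \<Rightarrow> real \<Rightarrow> real" where
  "bump R x = hflat (x + R) * hflat (R - x)"

lemma smooth_bump: "smooth (bump R)"
proof -
  have "smooth (\<lambda>x. hflat (1 * x + R))" "smooth (\<lambda>x. hflat ((-1) * x + R))"
    by (rule smooth_affine[OF smooth_hflat])+
  then have "smooth (\<lambda>x. hflat (1 * x + R) * hflat ((-1) * x + R))" by (rule smooth_mult)
  then show ?thesis unfolding bump_def[abs_def] by (simp add: add.commute)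
qed

lemma bump_nonneg: "bump R x \<ge> 0"
  unfolding bump_def using hflat_nonneg by simp

lemma bump_pos_iff: "bump R x > 0 \<longleftrightarrow> - R < x \<and> x < R"
proof
  assume "bump R x > 0"
  then have "hflat (x + R) \<noteq> 0" "hflat (R - x) \<noteq> 0" unfolding bump_def by auto
  then have "\<not> (x + R \<le> 0)" "\<not> (R - x \<le> 0)" using hflat_zero by blast+
  then show "- R < x \<and> x < R" by linarith
next
  assume "- R < x \<and> x < R"
  then show "bump R x > 0" unfolding bump_def using hflat_pos by simp
qed

lemma bump_zero: "\<not> (- R < x \<and> x < R) \<Longrightarrow> bump R x = 0"
  using bump_pos_iff[of R x] bump_nonneg[of R x] by linarith

lemma continuous_bump: "continuous_on UNIV (bump R)"
  using smooth_differentiable[OF smooth_bump]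
  by (simp add: continuous_at_imp_continuous_on differentiable_imp_continuous_within)

lemma test_fun_bump: "test_fun (bump R)"
  by (rule smooth_test_fun[OF smooth_bump, of "-R" R]) (auto intro!: bump_zero)

definition csupp :: "(real \<Rightarrow> real) \<Rightarrow> real \<Rightarrow> bool" where
  "csupp g R \<longleftrightarrow> continuous_on UNIV g \<and> (\<forall>x. R < \<bar>x\<bar> \<longrightarrow> g x = 0)"

lemma cont_on_open_piece:
  assumes "open S" "x \<in> S" "continuous_on S f" "\<And>y. y \<in> S \<Longrightarrow> q y = f y"
  shows "isCont q x"
proof -
  have "continuous_on S q" using assms(3,4) continuous_on_cong by force
  then show ?thesis using assms(1,2) continuous_on_eq_continuous_at by blast
qed

lemma approx_test:
  assumes g: "csupp g R" and R: "R > 0" and e: "e > 0"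
  shows "\<exists>\<phi>. test_fun \<phi> \<and> (\<forall>x. \<bar>g x - \<phi> x\<bar> \<le> e * bump (R+1) x)"
proof -
  define \<psi> where "\<psi> = bump (R+1)"
  define q where "q x = (if \<psi> x > 0 then g x / \<psi> x else 0)" for x
  have gc: "continuous_on UNIV g" and gz: "\<And>x. R < \<bar>x\<bar> \<Longrightarrow> g x = 0" using g by (auto simp: csupp_def)
  have \<psi>c: "continuous_on UNIV \<psi>" unfolding \<psi>_def by (rule continuous_bump)
  have qc: "isCont q x" for x
  proof (cases "\<bar>x\<bar> < R + 1")
    case True
    let ?S = "{-(R+1)<..<R+1}"
    have "continuous_on ?S (\<lambda>y. g y / \<psi> y)"
    proof (rule continuous_on_divide)
      show "continuous_on ?S g" using gc continuous_on_subset by blast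
      show "continuous_on ?S \<psi>" using \<psi>c continuous_on_subset by blast
      show "\<forall>y\<in>?S. \<psi> y \<noteq> 0"
      proof
        fix y assume "y \<in> ?S"
        then have "\<psi> y > 0" unfolding \<psi>_def by (subst bump_pos_iff) auto
        then show "\<psi> y \<noteq> 0" by simp
      qed
    qed
    moreover have "y \<in> ?S \<Longrightarrow> q y = g y / \<psi> y" for y
      unfolding q_def \<psi>_def using bump_pos_iff[of "R+1" y] by auto
    ultimately show ?thesis using True by (intro cont_on_open_piece[of ?S]) auto
  next
    case False
    let ?S = "{y. R < \<bar>y\<bar>}"
    have "open ?S" by (intro open_Collect_less continuous_intros)
    moreover have "y \<in> ?S \<Longrightarrow> q y = 0" for y unfolding q_def using gz by auto
    ultimately show ?thesis using False R
      by (intro cont_on_open_piece[of ?S _ "\<lambda>y. 0"]) auto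
  qed
  then have "continuous_on {-(R+1)..R+1} q" by (simp add: continuous_at_imp_continuous_on)
  then obtain p where p: "real_polynomial_function p" "\<And>x. x \<in> {-(R+1)..R+1} \<Longrightarrow> \<bar>q x - p x\<bar> < e"
    using Stone_Weierstrass_real_polynomial_function[of "{-(R+1)..R+1}" q e] e by auto
  define \<phi> where "\<phi> x = p x * \<psi> x" for x
  have "smooth \<phi>" unfolding \<phi>_def[abs_def] \<psi>_def by (intro smooth_mult smooth_poly p smooth_bump)
  then have "test_fun \<phi>"
    by (rule smooth_test_fun[of _ "-(R+1)" "R+1"]) (auto simp: \<phi>_def \<psi>_def intro!: bump_zero)
  moreover have "\<bar>g x - \<phi> x\<bar> \<le> e * \<psi> x" for x
  proof (cases "\<psi> x > 0")
    case True
    then have "- (R+1) < x \<and> x < R+1" unfolding \<psi>_def using bump_pos_iff[of "R+1" x] by blast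
    then have x: "x \<in> {-(R+1)..R+1}" by simp
    have "g x = q x * \<psi> x" using True by (simp add: q_def)
    then have "\<bar>g x - \<phi> x\<bar> = \<bar>q x - p x\<bar> * \<psi> x" using True by (simp add: \<phi>_def abs_mult left_diff_distrib[symmetric])
    also have "\<dots> \<le> e * \<psi> x" using p(2)[OF x] True by (intro mult_right_mono) auto
    finally show ?thesis .
  next
    case False
    then have z: "\<psi> x = 0" using bump_nonneg \<psi>_def by (metis less_eq_real_def)
    then have "\<not> (0 < bump (R+1) x)" unfolding \<psi>_def by simp
    then have "\<not> (- (R+1) < x \<and> x < R+1)" using bump_pos_iff[of "R+1" x] by blast
    then have "g x = 0" using gz by auto
    then show ?thesis using z by (simp add: \<phi>_def)
  qed
  ultimately show ?thesis unfolding \<psi>_def by blast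
qed



lemma int_diff_bound:
  fixes f g w :: "real \<Rightarrow> real"
  assumes "integrable N f" "integrable N g" "integrable N w" "\<And>x. \<bar>f x - g x\<bar> \<le> w x"
  shows "\<bar>integral\<^sup>L N f - integral\<^sup>L N g\<bar> \<le> integral\<^sup>L N w"
proof -
  have "integral\<^sup>L N f - integral\<^sup>L N g = integral\<^sup>L N (\<lambda>x. f x - g x)"
    using assms by (simp add: Bochner_Integration.integral_diff)
  also have "\<bar>\<dots>\<bar> \<le> integral\<^sup>L N w"
    using assms by (intro integral_abs_bound_integral Bochner_Integration.integrable_diff) auto
  finally show ?thesis .
qed

lemma nn_bound_lim:
  fixes fs :: "nat \<Rightarrow> 'a \<Rightarrow> real"
  assumes meas: "\<And>N. (\<lambda>x. ennreal (fs N x)) \<in> borel_measurable Mm"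
    and mono: "\<And>N x. fs N x \<le> fs (Suc N) x"
    and ev: "\<And>x. \<exists>N0. \<forall>N\<ge>N0. fs N x = f x"
    and bnd: "\<And>N. (\<integral>\<^sup>+x. ennreal (fs N x) \<partial>Mm) \<le> C"
  shows "(\<integral>\<^sup>+x. ennreal (f x) \<partial>Mm) \<le> C"
proof -
  have inc: "incseq (\<lambda>N x. ennreal (fs N x))"
    unfolding incseq_def le_fun_def
  proof (intro allI impI)
    fix m n :: nat and x assume "m \<le> n"
    then have "fs m x \<le> fs n x" using lift_Suc_mono_le[of "\<lambda>N. fs N x"] mono by blast
    then show "ennreal (fs m x) \<le> ennreal (fs n x)" by (rule ennreal_leI)
  qed
  have sup: "(SUP N. ennreal (fs N x)) = ennreal (f x)" for x
  proof -
    obtain N0 where N0: "\<forall>N\<ge>N0. fs N x = f x" using ev by blast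
    have "ennreal (fs N x) \<le> ennreal (f x)" for N
    proof -
      have "fs N x \<le> fs (max N N0) x" using lift_Suc_mono_le[of "\<lambda>N. fs N x"] mono by simp
      also have "\<dots> = f x" using N0 by simp
      finally show ?thesis by (rule ennreal_leI)
    qed
    moreover have "ennreal (f x) \<le> (SUP N. ennreal (fs N x))"
      using N0 by (metis SUP_upper UNIV_I order_refl)
    ultimately show ?thesis by (intro antisym SUP_least) auto
  qed
  have "(\<integral>\<^sup>+x. ennreal (f x) \<partial>Mm) = (\<integral>\<^sup>+x. (SUP N. ennreal (fs N x)) \<partial>Mm)"
    by (simp add: sup)
  also have "\<dots> = (SUP N. \<integral>\<^sup>+x. ennreal (fs N x) \<partial>Mm)"
    by (rule nn_integral_monotone_convergence_SUP[OF inc meas])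
  also have "\<dots> \<le> C" by (intro SUP_least bnd)
  finally show ?thesis .
qed

lemma csupp_integrable:
  assumes "csupp f R" shows "integrable lborel f"
proof -
  have "integrable lborel (\<lambda>x. indicator {-R..R} x *\<^sub>R f x)"
    using assms by (intro borel_integrable_compact) (auto simp: csupp_def intro: continuous_on_subset)
  moreover have "indicator {-R..R} x *\<^sub>R f x = f x" for x
  proof (cases "R < \<bar>x\<bar>")
    case True then show ?thesis using assms by (simp add: csupp_def)
  next
    case False then have "x \<in> {-R..R}" by auto
    then show ?thesis by simp
  qed
  then have "(\<lambda>x. indicator {-R..R} x *\<^sub>R f x) = f" by (rule ext)
  ultimately show ?thesis by simp
qed

lemma csupp_mult: "continuous_on UNIV h \<Longrightarrow> csupp f R \<Longrightarrow> csupp (\<lambda>x. h x * f x) R"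
  unfolding csupp_def by (auto intro: continuous_on_mult)

lemma test_fun_cont: "test_fun f \<Longrightarrow> continuous_on UNIV f"
proof -
  assume "test_fun f"
  then have "f differentiable (at x)" for x unfolding test_fun_def by (metis funpow_0)
  then show ?thesis by (simp add: continuous_at_imp_continuous_on differentiable_imp_continuous_within)
qed

lemma test_fun_csupp: "test_fun f \<Longrightarrow> \<exists>R. csupp f R"
proof -
  assume t: "test_fun f"
  then obtain a c where ac: "\<And>x. x \<notin> {a..c} \<Longrightarrow> f x = 0" unfolding test_fun_def by blast
  have "csupp f (\<bar>a\<bar> + \<bar>c\<bar>)" unfolding csupp_def using test_fun_cont[OF t] ac by force
  then show ?thesis by blast
qed



definition Sk :: "real \<Rightarrow> (real \<Rightarrow> real) \<Rightarrow> int \<Rightarrow> real" where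
  "Sk L \<eta> k = Sup ((\<lambda>x. \<bar>\<eta> (x + real_of_int k * L)\<bar>) ` {0..L})"

definition Ik :: "real \<Rightarrow> int \<Rightarrow> real set" where
  "Ik L k = {real_of_int k * L ..< real_of_int k * L + L}"

definition FF :: "(nat \<Rightarrow> real \<Rightarrow> real) \<Rightarrow> nat \<Rightarrow> (real \<Rightarrow> real) \<Rightarrow> real set \<Rightarrow> ennreal" where
  "FF b n \<eta> A = (\<integral>\<^sup>+x. ennreal (b n x * \<bar>\<eta> x\<bar> * indicator A x) \<partial>lborel)"

lemma Sk_bound:
  assumes c: "continuous_on UNIV \<eta>" and x: "x \<in> {real_of_int k * L .. real_of_int k * L + L}"
  shows "\<bar>\<eta> x\<bar> \<le> Sk L \<eta> k"
proof -
  let ?f = "\<lambda>y. \<bar>\<eta> (y + real_of_int k * L)\<bar>"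
  have "continuous_on {0..L} ?f"
    by (intro continuous_intros continuous_on_compose2[OF c]) auto
  then have "compact (?f ` {0..L})" by (intro compact_continuous_image) auto
  then have "bdd_above (?f ` {0..L})" by (intro bounded_imp_bdd_above compact_imp_bounded)
  moreover have "x - real_of_int k * L \<in> {0..L}" using x by auto
  then have "?f (x - real_of_int k * L) \<in> ?f ` {0..L}" by blast
  ultimately have "?f (x - real_of_int k * L) \<le> Sk L \<eta> k" unfolding Sk_def by (rule cSup_upper[rotated])
  then show ?thesis by simp
qed

lemma Sk_nonneg:
  assumes c: "continuous_on UNIV \<eta>" and L: "L \<ge> 0"
  shows "0 \<le> Sk L \<eta> k"
proof -
  have "\<bar>\<eta> (real_of_int k * L)\<bar> \<le> Sk L \<eta> k" using L by (intro Sk_bound[OF c]) auto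
  then show ?thesis by linarith
qed

lemma Ik_floor: "L > 0 \<Longrightarrow> x \<in> Ik L \<lfloor>x / L\<rfloor>"
proof -
  assume L: "L > 0"
  have a: "real_of_int \<lfloor>x / L\<rfloor> \<le> x / L" and b: "x / L < real_of_int \<lfloor>x / L\<rfloor> + 1" by linarith+
  have "real_of_int \<lfloor>x / L\<rfloor> * L \<le> x / L * L" using a L by (intro mult_right_mono) auto
  moreover have "x / L * L < (real_of_int \<lfloor>x / L\<rfloor> + 1) * L" using b L by (intro mult_strict_right_mono) auto
  ultimately have "real_of_int \<lfloor>x / L\<rfloor> * L \<le> x" "x < (real_of_int \<lfloor>x / L\<rfloor> + 1) * L"
    using L by auto
  then show ?thesis unfolding Ik_def by (simp add: algebra_simps)
qed

lemma Ik_sets[measurable]: "Ik L k \<in> sets borel" unfolding Ik_def by simp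

context
  fixes L \<alpha> :: real and b :: "nat \<Rightarrow> real \<Rightarrow> real"
  assumes Lpos: "L > 0" and apos: "\<alpha> > 0" and bL: "\<And>n. b n \<in> Lambda L \<alpha>"
begin

lemma b_cont: "continuous_on UNIV (b n)"
proof -
  from bL[of n] obtain b' where d: "\<And>x. (b n has_real_derivative b' x) (at x)"
    unfolding Lambda_def C1_fun_def by blast
  then have "isCont (b n) x" for x using DERIV_isCont by blast
  then show ?thesis by (simp add: continuous_at_imp_continuous_on)
qed

lemma b_meas[measurable]: "b n \<in> borel_measurable borel"
  by (rule borel_measurable_continuous_onI[OF b_cont])

lemma b_nonneg: "b n x \<ge> 0" using bL[of n] unfolding Lambda_def by blast

lemma b_per1: "b n (x + L) = b n x" using bL[of n] unfolding Lambda_def by blast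

lemma b_int0: "integral {0..L} (b n) = \<alpha> * L" using bL[of n] unfolding Lambda_def by blast

lemma b_per: "b n (x + real_of_int k * L) = b n x"
proof -
  have "\<forall>x. b n (x + real_of_int k * L) = b n x"
  proof (induction k rule: int_induct[where k=0])
    case base then show ?case by simp
  next
    case (step1 i)
    show ?case
    proof
      fix x
      have "b n (x + real_of_int (i+1) * L) = b n ((x + real_of_int i * L) + L)"
        by (simp add: algebra_simps)
      also have "\<dots> = b n x" using b_per1 step1 by simp
      finally show "b n (x + real_of_int (i+1) * L) = b n x" .
    qed
  next
    case (step2 i)
    show ?case
    proof
      fix x
      have "b n (x + real_of_int (i-1) * L) = b n ((x - L) + real_of_int i * L)"
        by (simp add: algebra_simps)
      also have "\<dots> = b n (x - L)" using step2 by blast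
      also have "\<dots> = b n ((x - L) + L)" using b_per1[of n "x - L"] by simp
      finally show "b n (x + real_of_int (i-1) * L) = b n x" by simp
    qed
  qed
  then show ?thesis by blast
qed

lemma b_period_integral:
  "(\<integral>\<^sup>+x. ennreal (b n x * indicator {real_of_int k * L .. real_of_int k * L + L} x) \<partial>lborel) = ennreal (\<alpha> * L)"
proof -
  define a where "a = real_of_int k * L"
  have "continuous_on {a..a+L} (b n)" using b_cont continuous_on_subset by blast
  then have hi: "(b n has_integral integral {a..a+L} (b n)) {a..a+L}"
    by (intro integrable_integral integrable_continuous_interval)
  have "integral {a..a+L} (b n) = integral {0+a..L+a} (b n)" by (simp add: add.commute)
  also have "\<dots> = integral {0..L} (b n \<circ> (+) a)" by (rule integral_shift_Icc_real[symmetric])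
  also have "(b n \<circ> (+) a) = b n" by (rule ext) (simp add: a_def b_per add.commute)
  also have "integral {0..L} (b n) = \<alpha> * L" by (rule b_int0)
  finally have "(b n has_integral \<alpha> * L) {a..a+L}" using hi by simp
  then have "((\<lambda>x. if x \<in> {a..a+L} then b n x else 0) has_integral \<alpha> * L) UNIV"
    by (simp only: has_integral_restrict_UNIV)
  moreover have "(\<lambda>x. if x \<in> {a..a+L} then b n x else 0) = (\<lambda>x. b n x * indicator {a..a+L} x)"
    by (auto simp: indicator_def)
  ultimately have "((\<lambda>x. b n x * indicator {a..a+L} x) has_integral \<alpha> * L) UNIV" by simp
  then have "integral\<^sup>N lborel (\<lambda>x. b n x * indicator {a..a+L} x) = \<alpha> * L"
    by (intro nn_integral_has_integral_lborel) (auto simp: b_nonneg)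
  then show ?thesis by (simp add: a_def)
qed

lemma FF_meas:
  assumes "continuous_on UNIV \<eta>" "A \<in> sets borel"
  shows "(\<lambda>x. ennreal (b n x * \<bar>\<eta> x\<bar> * indicator A x)) \<in> borel_measurable lborel"
proof -
  have [measurable]: "\<eta> \<in> borel_measurable borel" using assms(1) by (rule borel_measurable_continuous_onI)
  have [measurable]: "A \<in> sets borel" by fact
  show ?thesis by measurable
qed

lemma FF_Ik:
  assumes c: "continuous_on UNIV \<eta>"
  shows "FF b n \<eta> (Ik L k) \<le> ennreal (\<alpha> * L * Sk L \<eta> k)"
proof -
  let ?J = "{real_of_int k * L .. real_of_int k * L + L}"
  have S0: "0 \<le> Sk L \<eta> k" using Sk_nonneg[OF c] Lpos by simp
  have pt: "ennreal (b n x * \<bar>\<eta> x\<bar> * indicator (Ik L k) x) \<le> ennreal (Sk L \<eta> k) * ennreal (b n x * indicator ?J x)" for x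
  proof (cases "x \<in> Ik L k")
    case True
    then have xJ: "x \<in> ?J" unfolding Ik_def by auto
    then have "\<bar>\<eta> x\<bar> \<le> Sk L \<eta> k" by (rule Sk_bound[OF c])
    then have "\<bar>\<eta> x\<bar> * b n x \<le> Sk L \<eta> k * b n x" using b_nonneg[of n x] by (rule mult_right_mono)
    then have "b n x * \<bar>\<eta> x\<bar> \<le> Sk L \<eta> k * b n x" by (metis mult.commute)
    then have "ennreal (b n x * \<bar>\<eta> x\<bar> * indicator (Ik L k) x) \<le> ennreal (Sk L \<eta> k * (b n x * indicator ?J x))"
      using True xJ by (intro ennreal_leI) simp
    also have "\<dots> = ennreal (Sk L \<eta> k) * ennreal (b n x * indicator ?J x)" using S0 by (rule ennreal_mult')
    finally show ?thesis .
  next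
    case False then show ?thesis by simp
  qed
  have "FF b n \<eta> (Ik L k) \<le> (\<integral>\<^sup>+x. ennreal (Sk L \<eta> k) * ennreal (b n x * indicator ?J x) \<partial>lborel)"
    unfolding FF_def by (intro nn_integral_mono pt)
  also have "\<dots> = ennreal (Sk L \<eta> k) * (\<integral>\<^sup>+x. ennreal (b n x * indicator ?J x) \<partial>lborel)"
    by (intro nn_integral_cmult) measurable
  also have "\<dots> = ennreal (Sk L \<eta> k) * ennreal (\<alpha> * L)" by (simp only: b_period_integral)
  also have "\<dots> = ennreal (Sk L \<eta> k * (\<alpha> * L))" using S0 by (rule ennreal_mult'[symmetric])
  also have "\<dots> = ennreal (\<alpha> * L * Sk L \<eta> k)" by (simp only: mult.commute)
  finally show ?thesis .
qed

lemma FF_mono: "A \<subseteq> B \<Longrightarrow> FF b n \<eta> A \<le> FF b n \<eta> B"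
  unfolding FF_def
proof (intro nn_integral_mono ennreal_leI)
  fix x assume "A \<subseteq> B"
  then show "b n x * \<bar>\<eta> x\<bar> * indicator A x \<le> b n x * \<bar>\<eta> x\<bar> * indicator B x"
    using b_nonneg[of n x] by (auto simp: indicator_def)
qed

lemma FF_union:
  assumes c: "continuous_on UNIV \<eta>" and "A \<in> sets borel" "B \<in> sets borel"
  shows "FF b n \<eta> (A \<union> B) \<le> FF b n \<eta> A + FF b n \<eta> B"
proof -
  have "FF b n \<eta> (A \<union> B) \<le> (\<integral>\<^sup>+x. ennreal (b n x * \<bar>\<eta> x\<bar> * indicator A x) + ennreal (b n x * \<bar>\<eta> x\<bar> * indicator B x) \<partial>lborel)"
    unfolding FF_def
  proof (intro nn_integral_mono)
    fix x
    have "b n x * \<bar>\<eta> x\<bar> * indicator (A \<union> B) x \<le> b n x * \<bar>\<eta> x\<bar> * indicator A x + b n x * \<bar>\<eta> x\<bar> * indicator B x"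
      using b_nonneg[of n x] by (auto simp: indicator_def)
    then have "ennreal (b n x * \<bar>\<eta> x\<bar> * indicator (A \<union> B) x) \<le> ennreal (b n x * \<bar>\<eta> x\<bar> * indicator A x + b n x * \<bar>\<eta> x\<bar> * indicator B x)"
      by (rule ennreal_leI)
    also have "\<dots> = ennreal (b n x * \<bar>\<eta> x\<bar> * indicator A x) + ennreal (b n x * \<bar>\<eta> x\<bar> * indicator B x)"
      using b_nonneg[of n x] by (intro ennreal_plus) auto
    finally show "ennreal (b n x * \<bar>\<eta> x\<bar> * indicator (A \<union> B) x) \<le> ennreal (b n x * \<bar>\<eta> x\<bar> * indicator A x) + ennreal (b n x * \<bar>\<eta> x\<bar> * indicator B x)" .
  qed
  also have "\<dots> = FF b n \<eta> A + FF b n \<eta> B"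
    unfolding FF_def by (intro nn_integral_add FF_meas c assms)
  finally show ?thesis .
qed

lemma FF_Union:
  assumes c: "continuous_on UNIV \<eta>" and K: "finite K"
  shows "FF b n \<eta> (\<Union>k\<in>K. Ik L k) \<le> ennreal (\<alpha> * L * (\<Sum>k\<in>K. Sk L \<eta> k))"
  using K
proof (induction K rule: finite_induct)
  case empty then show ?case by (simp add: FF_def)
next
  case (insert k K)
  have S0: "0 \<le> Sk L \<eta> j" for j using Sk_nonneg[OF c] Lpos by simp
  have U: "(\<Union>j\<in>K. Ik L j) \<in> sets borel" using insert(1) by (intro sets.finite_UN) auto
  have "FF b n \<eta> (\<Union>j\<in>insert k K. Ik L j) = FF b n \<eta> (Ik L k \<union> (\<Union>j\<in>K. Ik L j))" by simp
  also have "\<dots> \<le> FF b n \<eta> (Ik L k) + FF b n \<eta> (\<Union>j\<in>K. Ik L j)"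
    by (rule FF_union[OF c Ik_sets U])
  also have "\<dots> \<le> ennreal (\<alpha> * L * Sk L \<eta> k) + ennreal (\<alpha> * L * (\<Sum>j\<in>K. Sk L \<eta> j))"
    by (intro add_mono FF_Ik c insert.IH)
  also have "\<dots> = ennreal (\<alpha> * L * Sk L \<eta> k + \<alpha> * L * (\<Sum>j\<in>K. Sk L \<eta> j))"
    using S0 Lpos apos by (intro ennreal_plus[symmetric] mult_nonneg_nonneg sum_nonneg) auto
  also have "\<dots> = ennreal (\<alpha> * L * (\<Sum>j\<in>insert k K. Sk L \<eta> j))"
    using insert(1,2) by (simp add: algebra_simps)
  finally show ?case .
qed

end



lemma floor_iff:
  assumes L: "L > 0"
  shows "(\<lfloor>x / L\<rfloor> \<in> {-int N..<int N}) \<longleftrightarrow> (-(real N * L) \<le> x \<and> x < real N * L)"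
proof -
  have "(-int N \<le> \<lfloor>x / L\<rfloor>) \<longleftrightarrow> -(real N) \<le> x / L" by (simp add: le_floor_iff)
  also have "\<dots> \<longleftrightarrow> -(real N * L) \<le> x" using L by (simp add: pos_le_divide_eq)
  finally have 1: "(-int N \<le> \<lfloor>x / L\<rfloor>) \<longleftrightarrow> -(real N * L) \<le> x" .
  have "(\<lfloor>x / L\<rfloor> < int N) \<longleftrightarrow> x / L < real N" by (simp add: floor_less_iff)
  also have "\<dots> \<longleftrightarrow> x < real N * L" using L by (simp add: pos_divide_less_eq)
  finally have 2: "(\<lfloor>x / L\<rfloor> < int N) \<longleftrightarrow> x < real N * L" .
  show ?thesis using 1 2 by auto
qed

lemma filterlim_sym_ivl: "filterlim (\<lambda>N::nat. {-int N..<int N}) (finite_subsets_at_top UNIV) sequentially"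
  unfolding filterlim_finite_subsets_at_top
proof (intro allI impI)
  fix X :: "int set" assume "finite X \<and> X \<subseteq> UNIV"
  then have "finite (abs ` X)" by simp
  then obtain u where u: "\<forall>x\<in>X. \<bar>x\<bar> \<le> u"
    using bdd_above_finite[of "abs ` X"] unfolding bdd_above_def by auto
  show "\<forall>\<^sub>F y in sequentially. finite {-int y..<int y} \<and> X \<subseteq> {-int y..<int y} \<and> {-int y..<int y} \<subseteq> UNIV"
    unfolding eventually_sequentially
  proof (intro exI[of _ "nat u + 1"] allI impI)
    fix N assume "nat u + 1 \<le> N"
    then have "u < int N" by linarith
    then show "finite {-int N..<int N} \<and> X \<subseteq> {-int N..<int N} \<and> {-int N..<int N} \<subseteq> UNIV"
      using u by force
  qed
qed

context
  fixes L \<alpha> :: real and b :: "nat \<Rightarrow> real \<Rightarrow> real" and \<eta> :: "real \<Rightarrow> real"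
  assumes Lpos: "L > 0" and apos: "\<alpha> > 0" and bL: "\<And>n. b n \<in> Lambda L \<alpha>"
    and \<eta>c: "continuous_on UNIV \<eta>" and hsum: "Sk L \<eta> summable_on UNIV"
begin

lemma bnn: "0 \<le> b n x" by (rule b_nonneg[OF Lpos apos bL])

lemma Sk0: "0 \<le> Sk L \<eta> k" using Sk_nonneg[OF \<eta>c] Lpos by simp

lemma sum_le_s: "finite K \<Longrightarrow> sum (Sk L \<eta>) K \<le> infsum (Sk L \<eta>) UNIV"
  by (rule finite_sum_le_infsum[OF hsum]) (auto simp: Sk0)

lemma PN_lim: "(\<lambda>N::nat. sum (Sk L \<eta>) {-int N..<int N}) \<longlonglongrightarrow> infsum (Sk L \<eta>) UNIV"
proof -
  have "(sum (Sk L \<eta>) \<longlongrightarrow> infsum (Sk L \<eta>) UNIV) (finite_subsets_at_top UNIV)"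
    using hsum unfolding summable_iff_has_sum_infsum has_sum_def .
  then show ?thesis by (rule filterlim_compose[OF _ filterlim_sym_ivl])
qed

lemma FF_full: "FF b n \<eta> UNIV \<le> ennreal (\<alpha> * L * infsum (Sk L \<eta>) UNIV)"
proof -
  define fs where "fs N x = b n x * \<bar>\<eta> x\<bar> * indicator {-(real N * L)..<real N * L} x" for N x
  have "(\<integral>\<^sup>+x. ennreal (b n x * \<bar>\<eta> x\<bar>) \<partial>lborel) \<le> ennreal (\<alpha> * L * infsum (Sk L \<eta>) UNIV)"
  proof (rule nn_bound_lim[where fs=fs])
    show "(\<lambda>x. ennreal (fs N x)) \<in> borel_measurable lborel" for N
      unfolding fs_def by (rule FF_meas[OF Lpos apos bL \<eta>c]) simp
    show "fs N x \<le> fs (Suc N) x" for N x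
      unfolding fs_def using bnn[of n x] Lpos
      by (intro mult_left_mono) (auto simp: indicator_def algebra_simps intro: order_trans[of _ "- (real N * L)"])
    show "\<exists>N0. \<forall>N\<ge>N0. fs N x = b n x * \<bar>\<eta> x\<bar>" for x
    proof -
      obtain N0 where N0: "\<bar>x\<bar> / L < real N0" using reals_Archimedean2 by blast
      have "\<forall>N\<ge>N0. fs N x = b n x * \<bar>\<eta> x\<bar>"
      proof (intro allI impI)
        fix N assume "N0 \<le> N"
        then have "\<bar>x\<bar> / L < real N" using N0 by (meson le_less_trans of_nat_le_iff less_le_trans)
        then have "\<bar>x\<bar> < real N * L" using Lpos by (simp add: pos_divide_less_eq)
        then show "fs N x = b n x * \<bar>\<eta> x\<bar>" unfolding fs_def by (auto simp: indicator_def)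
      qed
      then show ?thesis by blast
    qed
    show "(\<integral>\<^sup>+x. ennreal (fs N x) \<partial>lborel) \<le> ennreal (\<alpha> * L * infsum (Sk L \<eta>) UNIV)" for N
    proof -
      have sub: "{-(real N * L)..<real N * L} \<subseteq> (\<Union>k\<in>{-int N..<int N}. Ik L k)"
      proof
        fix x assume "x \<in> {-(real N * L)..<real N * L}"
        then have "\<lfloor>x / L\<rfloor> \<in> {-int N..<int N}" using floor_iff[OF Lpos] by auto
        then show "x \<in> (\<Union>k\<in>{-int N..<int N}. Ik L k)" using Ik_floor[OF Lpos, of x] by blast
      qed
      have "(\<integral>\<^sup>+x. ennreal (fs N x) \<partial>lborel) = FF b n \<eta> {-(real N * L)..<real N * L}"
        unfolding fs_def FF_def ..
      also have "\<dots> \<le> FF b n \<eta> (\<Union>k\<in>{-int N..<int N}. Ik L k)"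
        by (rule FF_mono[OF Lpos apos bL sub])
      also have "\<dots> \<le> ennreal (\<alpha> * L * (\<Sum>k\<in>{-int N..<int N}. Sk L \<eta> k))"
        by (rule FF_Union[OF Lpos apos bL \<eta>c]) simp
      also have "\<dots> \<le> ennreal (\<alpha> * L * infsum (Sk L \<eta>) UNIV)"
        using sum_le_s[of "{-int N..<int N}"] Lpos apos by (intro ennreal_leI mult_left_mono) auto
      finally show ?thesis .
    qed
  qed
  then show ?thesis unfolding FF_def by simp
qed

lemma FF_tail: "FF b n \<eta> (- {-(real N * L)..<real N * L})
   \<le> ennreal (\<alpha> * L * (infsum (Sk L \<eta>) UNIV - sum (Sk L \<eta>) {-int N..<int N}))"
proof -
  define T where "T = - {-(real N * L)..<real N * L}"
  define fs where "fs M x = b n x * \<bar>\<eta> x\<bar> * indicator (T \<inter> {-(real M * L)..<real M * L}) x" for M x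
  let ?C = "ennreal (\<alpha> * L * (infsum (Sk L \<eta>) UNIV - sum (Sk L \<eta>) {-int N..<int N}))"
  have "(\<integral>\<^sup>+x. ennreal (b n x * \<bar>\<eta> x\<bar> * indicator T x) \<partial>lborel) \<le> ?C"
  proof (rule nn_bound_lim[where fs=fs])
    show "(\<lambda>x. ennreal (fs M x)) \<in> borel_measurable lborel" for M
      unfolding fs_def T_def by (rule FF_meas[OF Lpos apos bL \<eta>c]) simp
    show "fs M x \<le> fs (Suc M) x" for M x
      unfolding fs_def using bnn[of n x] Lpos
      by (intro mult_left_mono) (auto simp: indicator_def algebra_simps intro: order_trans[of _ "- (real M * L)"])
    show "\<exists>N0. \<forall>M\<ge>N0. fs M x = b n x * \<bar>\<eta> x\<bar> * indicator T x" for x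
    proof -
      obtain N0 where N0: "\<bar>x\<bar> / L < real N0" using reals_Archimedean2 by blast
      have "\<forall>M\<ge>N0. fs M x = b n x * \<bar>\<eta> x\<bar> * indicator T x"
      proof (intro allI impI)
        fix M assume "N0 \<le> M"
        then have "\<bar>x\<bar> / L < real M" using N0 by (meson le_less_trans of_nat_le_iff less_le_trans)
        then have "\<bar>x\<bar> < real M * L" using Lpos by (simp add: pos_divide_less_eq)
        then show "fs M x = b n x * \<bar>\<eta> x\<bar> * indicator T x" unfolding fs_def by (auto simp: indicator_def)
      qed
      then show ?thesis by blast
    qed
    show "(\<integral>\<^sup>+x. ennreal (fs M x) \<partial>lborel) \<le> ?C" for M
    proof -
      let ?K = "{-int M..<int M} - {-int N..<int N}"
      have sub: "T \<inter> {-(real M * L)..<real M * L} \<subseteq> (\<Union>k\<in>?K. Ik L k)"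
      proof
        fix x assume "x \<in> T \<inter> {-(real M * L)..<real M * L}"
        then have "\<lfloor>x / L\<rfloor> \<in> ?K" using floor_iff[OF Lpos, of x] floor_iff[OF Lpos, of x M]
          unfolding T_def by auto
        then show "x \<in> (\<Union>k\<in>?K. Ik L k)" using Ik_floor[OF Lpos, of x] by blast
      qed
      have "sum (Sk L \<eta>) ?K + sum (Sk L \<eta>) {-int N..<int N} = sum (Sk L \<eta>) (?K \<union> {-int N..<int N})"
        by (rule sum.union_disjoint[symmetric]) auto
      also have "\<dots> \<le> infsum (Sk L \<eta>) UNIV" by (rule sum_le_s) simp
      finally have ks: "sum (Sk L \<eta>) ?K \<le> infsum (Sk L \<eta>) UNIV - sum (Sk L \<eta>) {-int N..<int N}" by simp
      have "(\<integral>\<^sup>+x. ennreal (fs M x) \<partial>lborel) = FF b n \<eta> (T \<inter> {-(real M * L)..<real M * L})"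
        unfolding fs_def FF_def ..
      also have "\<dots> \<le> FF b n \<eta> (\<Union>k\<in>?K. Ik L k)"
        by (rule FF_mono[OF Lpos apos bL sub])
      also have "\<dots> \<le> ennreal (\<alpha> * L * (\<Sum>k\<in>?K. Sk L \<eta> k))"
        by (rule FF_Union[OF Lpos apos bL \<eta>c]) simp
      also have "\<dots> \<le> ?C"
        using ks Lpos apos by (intro ennreal_leI mult_left_mono) auto
      finally show ?thesis .
    qed
  qed
  then show ?thesis unfolding FF_def T_def .
qed

end



context
  fixes L \<alpha> :: real and b :: "nat \<Rightarrow> real \<Rightarrow> real" and M :: "real measure"
  assumes Lpos: "L > 0" and apos: "\<alpha> > 0" and bL: "\<And>n. b n \<in> Lambda L \<alpha>"
    and sM: "sets M = sets borel" and ws: "weak_star_conv b M"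
begin

lemma contM: "continuous_on UNIV f \<Longrightarrow> f \<in> borel_measurable M"
  by (simp add: measurable_cong_sets[OF sM refl] borel_measurable_continuous_onI)

lemma bnn': "0 \<le> b n x" by (rule b_nonneg[OF Lpos apos bL])

lemma bcont': "continuous_on UNIV (b n)" by (rule b_cont[OF Lpos apos bL])

lemma bint_csupp: "csupp f R \<Longrightarrow> integrable lborel (\<lambda>x. b n x * f x)"
  by (rule csupp_integrable[OF csupp_mult[OF bcont']])

lemma test_facts:
  assumes "test_fun \<phi>"
  shows "integrable M \<phi>" "(\<lambda>n. LINT x|lborel. b n x * \<phi> x) \<longlonglongrightarrow> (LINT x|M. \<phi> x)"
    "integrable lborel (\<lambda>x. b n x * \<phi> x)"
proof -
  show "integrable M \<phi>" "(\<lambda>n. LINT x|lborel. b n x * \<phi> x) \<longlonglongrightarrow> (LINT x|M. \<phi> x)"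
    using ws assms unfolding weak_star_conv_def by blast+
  obtain R where "csupp \<phi> R" using test_fun_csupp[OF assms] by blast
  then show "integrable lborel (\<lambda>x. b n x * \<phi> x)" by (rule bint_csupp)
qed

lemma conv_csupp:
  assumes g: "csupp g R" and R: "R > 0"
  shows "integrable M g \<and> (\<lambda>n. LINT x|lborel. b n x * g x) \<longlonglongrightarrow> (LINT x|M. g x)"
proof -
  define \<psi> where "\<psi> = bump (R+1)"
  have t\<psi>: "test_fun \<psi>" unfolding \<psi>_def by (rule test_fun_bump)
  note \<psi>f = test_facts[OF t\<psi>]
  define C where "C = (LINT x|M. \<psi> x)"
  have C0: "C \<ge> 0" unfolding C_def \<psi>_def by (intro integral_nonneg_AE) (simp add: bump_nonneg)
  have \<psi>0: "\<psi> x \<ge> 0" for x unfolding \<psi>_def by (rule bump_nonneg)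
  have gl: "integrable lborel (\<lambda>x. b n x * g x)" for n by (rule bint_csupp[OF g])
  have gmeas: "g \<in> borel_measurable M" using g by (intro contM) (simp add: csupp_def)
  have key: "\<exists>\<phi>. test_fun \<phi> \<and> (\<forall>x. \<bar>g x - \<phi> x\<bar> \<le> e * \<psi> x)" if "e > 0" for e
    unfolding \<psi>_def by (rule approx_test[OF g R that])
  obtain \<phi>1 where \<phi>1: "test_fun \<phi>1" "\<And>x. \<bar>g x - \<phi>1 x\<bar> \<le> 1 * \<psi> x" using key[of 1] by auto
  have gM: "integrable M g"
  proof (rule Bochner_Integration.integrable_bound[OF _ gmeas])
    show "integrable M (\<lambda>x. \<bar>\<phi>1 x\<bar> + \<psi> x)"
      using test_facts(1)[OF \<phi>1(1)] \<psi>f(1) by (intro Bochner_Integration.integrable_add integrable_abs)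
    show "AE x in M. norm (g x) \<le> norm (\<bar>\<phi>1 x\<bar> + \<psi> x)"
    proof (intro AE_I2)
      fix x
      have "\<bar>g x\<bar> \<le> \<bar>\<phi>1 x\<bar> + \<psi> x" using \<phi>1(2)[of x] by linarith
      then show "norm (g x) \<le> norm (\<bar>\<phi>1 x\<bar> + \<psi> x)" using \<psi>0[of x] by simp
    qed
  qed
  have lim: "(\<lambda>n. LINT x|lborel. b n x * g x) \<longlonglongrightarrow> (LINT x|M. g x)"
  proof (rule LIMSEQ_I)
    fix r :: real assume r: "r > 0"
    define \<epsilon> where "\<epsilon> = r / (2 * C + 3)"
    have \<epsilon>0: "\<epsilon> > 0" unfolding \<epsilon>_def using r C0 by simp
    have h\<epsilon>: "\<epsilon> * (2 * C + 3) = r" unfolding \<epsilon>_def using C0 by simp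
    have r\<epsilon>: "2 * (\<epsilon> * C) + 3 * \<epsilon> = r" using h\<epsilon> by (simp add: algebra_simps)
    obtain \<phi> where \<phi>: "test_fun \<phi>" "\<And>x. \<bar>g x - \<phi> x\<bar> \<le> \<epsilon> * \<psi> x" using key[OF \<epsilon>0] by auto
    note \<phi>f = test_facts[OF \<phi>(1)]
    obtain N1 where N1: "\<forall>n\<ge>N1. norm ((LINT x|lborel. b n x * \<phi> x) - (LINT x|M. \<phi> x)) < \<epsilon>"
      using LIMSEQ_D[OF \<phi>f(2) \<epsilon>0] by blast
    obtain N2 where N2: "\<forall>n\<ge>N2. norm ((LINT x|lborel. b n x * \<psi> x) - C) < 1"
      using LIMSEQ_D[OF \<psi>f(2)[folded C_def]] by force
    show "\<exists>no. \<forall>n\<ge>no. norm ((LINT x|lborel. b n x * g x) - (LINT x|M. g x)) < r"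
    proof (intro exI[of _ "max N1 N2"] allI impI)
      fix n assume n: "max N1 N2 \<le> n"
      have a1: "\<bar>(LINT x|lborel. b n x * g x) - (LINT x|lborel. b n x * \<phi> x)\<bar>
                 \<le> (LINT x|lborel. \<epsilon> * (b n x * \<psi> x))"
      proof (rule int_diff_bound[OF gl \<phi>f(3)])
        show "integrable lborel (\<lambda>x. \<epsilon> * (b n x * \<psi> x))" using \<psi>f(3) by simp
        fix x
        have "\<bar>b n x * g x - b n x * \<phi> x\<bar> = b n x * \<bar>g x - \<phi> x\<bar>"
          using bnn'[of n x] by (simp add: abs_mult right_diff_distrib[symmetric])
        also have "\<dots> \<le> b n x * (\<epsilon> * \<psi> x)" using bnn'[of n x] \<phi>(2)[of x] by (rule mult_left_mono[rotated])
        finally show "\<bar>b n x * g x - b n x * \<phi> x\<bar> \<le> \<epsilon> * (b n x * \<psi> x)" by (simp add: algebra_simps)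
      qed
      have a2: "(LINT x|lborel. b n x * \<psi> x) < C + 1" using N2 n by auto
      have a2': "\<epsilon> * (LINT x|lborel. b n x * \<psi> x) \<le> \<epsilon> * C + \<epsilon>"
        using mult_left_mono[OF less_imp_le[OF a2], of \<epsilon>] \<epsilon>0 by (simp add: algebra_simps)
      have a3: "\<bar>(LINT x|M. \<phi> x) - (LINT x|M. g x)\<bar> \<le> (LINT x|M. \<epsilon> * \<psi> x)"
      proof (rule int_diff_bound[OF \<phi>f(1) gM])
        show "integrable M (\<lambda>x. \<epsilon> * \<psi> x)" using \<psi>f(1) by simp
        fix x show "\<bar>\<phi> x - g x\<bar> \<le> \<epsilon> * \<psi> x" using \<phi>(2)[of x] by linarith
      qed
      have a3': "(LINT x|M. \<epsilon> * \<psi> x) = \<epsilon> * C" by (simp add: C_def)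
      have a4: "\<bar>(LINT x|lborel. b n x * \<phi> x) - (LINT x|M. \<phi> x)\<bar> < \<epsilon>" using N1 n by auto
      have a1': "(LINT x|lborel. \<epsilon> * (b n x * \<psi> x)) = \<epsilon> * (LINT x|lborel. b n x * \<psi> x)" by simp
      show "norm ((LINT x|lborel. b n x * g x) - (LINT x|M. g x)) < r"
        unfolding real_norm_def using a1 a1' a2' a3 a3' a4 r\<epsilon> by linarith
    qed
  qed
  show ?thesis using gM lim by blast
qed

end



definition chi :: "real \<Rightarrow> nat \<Rightarrow> real \<Rightarrow> real" where
  "chi L N x = max 0 (min 1 (real N * L + 1 - \<bar>x\<bar>))"

lemma chi_cont: "continuous_on UNIV (chi L N)"
  unfolding chi_def[abs_def] by (intro continuous_intros)

lemma chi_ge0: "0 \<le> chi L N x" and chi_le1: "chi L N x \<le> 1"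
  unfolding chi_def by auto

lemma chi_one: "\<bar>x\<bar> \<le> real N * L \<Longrightarrow> chi L N x = 1"
  unfolding chi_def by auto

lemma chi_zero: "real N * L + 1 < \<bar>x\<bar> \<Longrightarrow> chi L N x = 0"
  unfolding chi_def by auto

lemma chi_mono: "L \<ge> 0 \<Longrightarrow> chi L N x \<le> chi L (Suc N) x"
  unfolding chi_def by (auto simp: algebra_simps intro!: max.mono min.mono)

lemma csupp_chi: "continuous_on UNIV f \<Longrightarrow> csupp (\<lambda>x. f x * chi L N x) (real N * L + 1)"
  unfolding csupp_def using chi_zero by (auto intro!: continuous_on_mult chi_cont)



theorem mainTheorem13:
  fixes L \<alpha> :: real and b :: "nat \<Rightarrow> real \<Rightarrow> real" and M :: "real measure"
    and \<eta> :: "real \<Rightarrow> real"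
  assumes "L > 0" and "\<alpha> > 0"
    and "\<forall>n. b n \<in> Lambda L \<alpha>"
    and "M \<in> Lambda_bar L \<alpha>"
    and "weak_star_conv b M"
    and "continuous_on UNIV \<eta>"
    and "(\<lambda>k::int. Sup ((\<lambda>x. \<bar>\<eta> (x + real_of_int k * L)\<bar>) ` {0..L})) summable_on UNIV"
  shows "integrable M \<eta> \<and>
         (\<forall>n. integrable lborel (\<lambda>x. b n x * \<eta> x)) \<and>
         ((\<lambda>n. LINT x|lborel. b n x * \<eta> x) \<longlonglongrightarrow> (LINT x|M. \<eta> x)) \<and>
         ((LINT x|M. \<bar>\<eta> x\<bar>) \<le>
           \<alpha> * L * (\<Sum>\<^sub>\<infinity>k::int. Sup ((\<lambda>x. \<bar>\<eta> (x + real_of_int k * L)\<bar>) ` {0..L})))"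
proof -
  note Lpos = assms(1) and apos = assms(2) and ws = assms(5) and \<eta>c = assms(6)
  have sM: "sets M = sets borel" using assms(4) unfolding Lambda_bar_def by blast
  have bL: "\<And>n. b n \<in> Lambda L \<alpha>" using assms(3) by blast
  have Sk_eq: "(\<lambda>k::int. Sup ((\<lambda>x. \<bar>\<eta> (x + real_of_int k * L)\<bar>) ` {0..L})) = Sk L \<eta>"
    by (rule ext) (simp add: Sk_def)
  have hsum: "Sk L \<eta> summable_on UNIV" using assms(7) unfolding Sk_eq .
  define s where "s = infsum (Sk L \<eta>) UNIV"
  have Sk0: "\<And>k. 0 \<le> Sk L \<eta> k" using Sk_nonneg[OF \<eta>c] Lpos by simp
  have s0: "s \<ge> 0" unfolding s_def by (rule infsum_nonneg) (rule Sk0)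
  have aLs0: "0 \<le> \<alpha> * L * s" using s0 Lpos apos by simp
  have bnn: "\<And>n x. 0 \<le> b n x" by (rule b_nonneg[OF Lpos apos bL])
  have bc: "\<And>n. continuous_on UNIV (b n)" by (rule b_cont[OF Lpos apos bL])
  have \<eta>M: "\<eta> \<in> borel_measurable M" by (rule contM[OF Lpos apos bL sM ws \<eta>c])
  have FF_full': "\<And>n. FF b n \<eta> UNIV \<le> ennreal (\<alpha> * L * s)"
    unfolding s_def by (rule FF_full[OF Lpos apos bL \<eta>c hsum])

  have bmeas: "(\<lambda>x. b n x * \<eta> x) \<in> borel_measurable lborel" for n
  proof -
    have "(\<lambda>x. b n x * \<eta> x) \<in> borel_measurable borel"
      by (intro borel_measurable_continuous_onI continuous_on_mult bc \<eta>c)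
    then show ?thesis by simp
  qed
  have bnorm: "(\<integral>\<^sup>+x. ennreal (norm (b n x * \<eta> x)) \<partial>lborel) = FF b n \<eta> UNIV" for n
    unfolding FF_def by (simp add: abs_mult bnn)
  have bint: "\<forall>n. integrable lborel (\<lambda>x. b n x * \<eta> x)"
  proof
    fix n
    show "integrable lborel (\<lambda>x. b n x * \<eta> x)"
    proof (rule integrableI_bounded[OF bmeas])
      have "FF b n \<eta> UNIV < \<infinity>" using FF_full'[of n] by (simp add: top.not_eq_extremum le_less_trans)
      then show "(\<integral>\<^sup>+x. ennreal (norm (b n x * \<eta> x)) \<partial>lborel) < \<infinity>" by (simp only: bnorm)
    qed
  qed
  have babs_int: "integrable lborel (\<lambda>x. b n x * \<bar>\<eta> x\<bar>)" for n
  proof -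
    have "integrable lborel (\<lambda>x. \<bar>b n x * \<eta> x\<bar>)" using bint by (intro integrable_abs) auto
    then show ?thesis by (simp add: abs_mult bnn)
  qed
  have babs_le: "(LINT x|lborel. b n x * \<bar>\<eta> x\<bar>) \<le> \<alpha> * L * s" for n
  proof -
    have "ennreal (LINT x|lborel. b n x * \<bar>\<eta> x\<bar>) = (\<integral>\<^sup>+x. ennreal (b n x * \<bar>\<eta> x\<bar>) \<partial>lborel)"
      by (rule nn_integral_eq_integral[symmetric, OF babs_int]) (simp add: bnn)
    also have "\<dots> = FF b n \<eta> UNIV" unfolding FF_def by simp
    also have "\<dots> \<le> ennreal (\<alpha> * L * s)" by (rule FF_full')
    finally show ?thesis using aLs0 by simp
  qed

  have conv: "\<And>g R. csupp g R \<Longrightarrow> R > 0 \<Longrightarrow> integrable M g \<and> (\<lambda>n. LINT x|lborel. b n x * g x) \<longlonglongrightarrow> (LINT x|M. g x)"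
    by (rule conv_csupp[OF Lpos apos bL sM ws])
  have absc: "continuous_on UNIV (\<lambda>x. \<bar>\<eta> x\<bar>)" using \<eta>c by (intro continuous_intros)
  have R0: "real N * L + 1 > 0" for N using Lpos by (intro add_nonneg_pos mult_nonneg_nonneg) auto
  have convA: "integrable M (\<lambda>x. \<bar>\<eta> x\<bar> * chi L N x) \<and>
      (\<lambda>n. LINT x|lborel. b n x * (\<bar>\<eta> x\<bar> * chi L N x)) \<longlonglongrightarrow> (LINT x|M. \<bar>\<eta> x\<bar> * chi L N x)" for N
    by (rule conv[OF csupp_chi[OF absc] R0])
  have convB: "integrable M (\<lambda>x. \<eta> x * chi L N x) \<and>
      (\<lambda>n. LINT x|lborel. b n x * (\<eta> x * chi L N x)) \<longlonglongrightarrow> (LINT x|M. \<eta> x * chi L N x)" for N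
    by (rule conv[OF csupp_chi[OF \<eta>c] R0])
  have Mchi: "(LINT x|M. \<bar>\<eta> x\<bar> * chi L N x) \<le> \<alpha> * L * s" for N
  proof (rule LIMSEQ_le_const2[OF convA[THEN conjunct2]])
    show "\<exists>N0. \<forall>n\<ge>N0. (LINT x|lborel. b n x * (\<bar>\<eta> x\<bar> * chi L N x)) \<le> \<alpha> * L * s"
    proof (intro exI allI impI)
      fix n
      have "(LINT x|lborel. b n x * (\<bar>\<eta> x\<bar> * chi L N x)) \<le> (LINT x|lborel. b n x * \<bar>\<eta> x\<bar>)"
      proof (rule integral_mono[OF _ babs_int])
        show "integrable lborel (\<lambda>x. b n x * (\<bar>\<eta> x\<bar> * chi L N x))"
          by (rule bint_csupp[OF Lpos apos bL sM ws csupp_chi[OF absc]])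
        fix x
        have "\<bar>\<eta> x\<bar> * chi L N x \<le> \<bar>\<eta> x\<bar>" using chi_le1[of L N x] by (simp add: mult_left_le)
        then show "b n x * (\<bar>\<eta> x\<bar> * chi L N x) \<le> b n x * \<bar>\<eta> x\<bar>" using bnn by (rule mult_left_mono)
      qed
      then show "(LINT x|lborel. b n x * (\<bar>\<eta> x\<bar> * chi L N x)) \<le> \<alpha> * L * s" using babs_le[of n] by linarith
    qed
  qed
  have nnM: "(\<integral>\<^sup>+x. ennreal \<bar>\<eta> x\<bar> \<partial>M) \<le> ennreal (\<alpha> * L * s)"
  proof (rule nn_bound_lim[where fs="\<lambda>N x. \<bar>\<eta> x\<bar> * chi L N x"])
    show "(\<lambda>x. ennreal (\<bar>\<eta> x\<bar> * chi L N x)) \<in> borel_measurable M" for N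
    proof -
      have "(\<lambda>x. \<bar>\<eta> x\<bar> * chi L N x) \<in> borel_measurable M"
        by (intro contM[OF Lpos apos bL sM ws] continuous_on_mult absc chi_cont)
      then show ?thesis by (rule measurable_compose[OF _ measurable_ennreal])
    qed
    show "\<bar>\<eta> x\<bar> * chi L N x \<le> \<bar>\<eta> x\<bar> * chi L (Suc N) x" for N x
      using chi_mono[of L N x] Lpos by (intro mult_left_mono) auto
    show "\<exists>N0. \<forall>N\<ge>N0. \<bar>\<eta> x\<bar> * chi L N x = \<bar>\<eta> x\<bar>" for x
    proof -
      obtain N0 where N0: "\<bar>x\<bar> / L < real N0" using reals_Archimedean2 by blast
      have "\<forall>N\<ge>N0. \<bar>\<eta> x\<bar> * chi L N x = \<bar>\<eta> x\<bar>"
      proof (intro allI impI)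
        fix N assume "N0 \<le> N"
        then have "\<bar>x\<bar> / L < real N" using N0 by (meson le_less_trans of_nat_le_iff less_le_trans)
        then have "\<bar>x\<bar> \<le> real N * L" using Lpos by (simp add: pos_divide_less_eq)
        then show "\<bar>\<eta> x\<bar> * chi L N x = \<bar>\<eta> x\<bar>" by (simp add: chi_one)
      qed
      then show ?thesis by blast
    qed
    show "(\<integral>\<^sup>+x. ennreal (\<bar>\<eta> x\<bar> * chi L N x) \<partial>M) \<le> ennreal (\<alpha> * L * s)" for N
    proof -
      have "(\<integral>\<^sup>+x. ennreal (\<bar>\<eta> x\<bar> * chi L N x) \<partial>M) = ennreal (LINT x|M. \<bar>\<eta> x\<bar> * chi L N x)"
        using convA[of N] by (intro nn_integral_eq_integral) (auto simp: chi_ge0)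
      also have "\<dots> \<le> ennreal (\<alpha> * L * s)" using Mchi[of N] by (rule ennreal_leI)
      finally show ?thesis .
    qed
  qed
  have \<eta>int: "integrable M \<eta>"
  proof (rule integrableI_bounded[OF \<eta>M])
    have "(\<integral>\<^sup>+x. ennreal (norm (\<eta> x)) \<partial>M) \<le> ennreal (\<alpha> * L * s)" using nnM by simp
    then show "(\<integral>\<^sup>+x. ennreal (norm (\<eta> x)) \<partial>M) < \<infinity>" by (simp add: top.not_eq_extremum le_less_trans)
  qed
  have absint: "integrable M (\<lambda>x. \<bar>\<eta> x\<bar>)" using \<eta>int by (rule integrable_abs)
  have absbound: "(LINT x|M. \<bar>\<eta> x\<bar>) \<le> \<alpha> * L * s"
  proof -
    have "ennreal (LINT x|M. \<bar>\<eta> x\<bar>) = (\<integral>\<^sup>+x. ennreal \<bar>\<eta> x\<bar> \<partial>M)"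
      by (rule nn_integral_eq_integral[symmetric, OF absint]) simp
    also have "\<dots> \<le> ennreal (\<alpha> * L * s)" by (rule nnM)
    finally show ?thesis using aLs0 by simp
  qed

  define P where "P N = sum (Sk L \<eta>) {-int N..<int N}" for N :: nat
  have PN: "P \<longlonglongrightarrow> s" unfolding s_def P_def[abs_def] by (rule PN_lim[OF Lpos apos bL \<eta>c hsum])
  have [measurable]: "b n \<in> borel_measurable borel" for n by (rule borel_measurable_continuous_onI[OF bc])
  have [measurable]: "\<eta> \<in> borel_measurable borel" by (rule borel_measurable_continuous_onI[OF \<eta>c])
  define T where "T N = - {-(real N * L)..<real N * L}" for N :: nat
  have T_sets[measurable]: "T N \<in> sets borel" for N unfolding T_def by simp
  have int_T: "integrable lborel (\<lambda>x. b n x * \<bar>\<eta> x\<bar> * indicator (T N) x)" for n N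
  proof (rule Bochner_Integration.integrable_bound[OF babs_int])
    have m1: "(\<lambda>x. b n x * \<bar>\<eta> x\<bar>) \<in> borel_measurable borel"
      by (intro borel_measurable_continuous_onI continuous_on_mult bc absc)
    have m2: "(indicator (T N) :: real \<Rightarrow> real) \<in> borel_measurable borel"
      by (rule borel_measurable_indicator[OF T_sets])
    have "(\<lambda>x. b n x * \<bar>\<eta> x\<bar> * indicator (T N) x) \<in> borel_measurable borel"
      using borel_measurable_times[OF m1 m2] by simp
    then show "(\<lambda>x. b n x * \<bar>\<eta> x\<bar> * indicator (T N) x) \<in> borel_measurable lborel" by simp
    show "AE x in lborel. norm (b n x * \<bar>\<eta> x\<bar> * indicator (T N) x) \<le> norm (b n x * \<bar>\<eta> x\<bar>)"
      using bnn by (intro AE_I2) (auto simp: indicator_def abs_mult)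
  qed
  have tail: "(LINT x|lborel. b n x * \<bar>\<eta> x\<bar> * indicator (T N) x) \<le> \<alpha> * L * (s - P N)" for n N
  proof -
    have sP: "P N \<le> s" unfolding s_def P_def by (rule sum_le_s[OF Lpos apos bL \<eta>c hsum]) simp
    have "ennreal (LINT x|lborel. b n x * \<bar>\<eta> x\<bar> * indicator (T N) x)
        = (\<integral>\<^sup>+x. ennreal (b n x * \<bar>\<eta> x\<bar> * indicator (T N) x) \<partial>lborel)"
      by (rule nn_integral_eq_integral[symmetric, OF int_T]) (simp add: bnn)
    also have "\<dots> = FF b n \<eta> (T N)" unfolding FF_def ..
    also have "\<dots> \<le> ennreal (\<alpha> * L * (s - P N))"
      unfolding T_def s_def P_def by (rule FF_tail[OF Lpos apos bL \<eta>c hsum])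
    finally show ?thesis using sP Lpos apos by simp
  qed
  have Mlim: "(\<lambda>N. LINT x|M. \<bar>\<eta> x\<bar> * chi L N x) \<longlonglongrightarrow> (LINT x|M. \<bar>\<eta> x\<bar>)"
  proof (rule integral_dominated_convergence[where w="\<lambda>x. \<bar>\<eta> x\<bar>"])
    show "(\<lambda>x. \<bar>\<eta> x\<bar>) \<in> borel_measurable M" by (rule contM[OF Lpos apos bL sM ws absc])
    show "(\<lambda>x. \<bar>\<eta> x\<bar> * chi L N x) \<in> borel_measurable M" for N
      by (intro contM[OF Lpos apos bL sM ws] continuous_on_mult absc chi_cont)
    show "integrable M (\<lambda>x. \<bar>\<eta> x\<bar>)" by (rule absint)
    show "AE x in M. (\<lambda>N. \<bar>\<eta> x\<bar> * chi L N x) \<longlonglongrightarrow> \<bar>\<eta> x\<bar>"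
    proof (intro AE_I2)
      fix x
      obtain N0 where N0: "\<bar>x\<bar> / L < real N0" using reals_Archimedean2 by blast
      have "eventually (\<lambda>N. \<bar>\<eta> x\<bar> = \<bar>\<eta> x\<bar> * chi L N x) sequentially"
        unfolding eventually_sequentially
      proof (intro exI[of _ N0] allI impI)
        fix N assume "N0 \<le> N"
        then have "\<bar>x\<bar> / L < real N" using N0 by (meson le_less_trans of_nat_le_iff less_le_trans)
        then have "\<bar>x\<bar> \<le> real N * L" using Lpos by (simp add: pos_divide_less_eq)
        then show "\<bar>\<eta> x\<bar> = \<bar>\<eta> x\<bar> * chi L N x" by (simp add: chi_one)
      qed
      then show "(\<lambda>N. \<bar>\<eta> x\<bar> * chi L N x) \<longlonglongrightarrow> \<bar>\<eta> x\<bar>"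
        by (rule Lim_transform_eventually[OF tendsto_const])
    qed
    show "AE x in M. norm (\<bar>\<eta> x\<bar> * chi L N x) \<le> \<bar>\<eta> x\<bar>" for N
    proof (intro AE_I2)
      fix x
      have "\<bar>\<eta> x\<bar> * chi L N x \<le> \<bar>\<eta> x\<bar>" using chi_le1[of L N x] by (simp add: mult_left_le)
      then show "norm (\<bar>\<eta> x\<bar> * chi L N x) \<le> \<bar>\<eta> x\<bar>" using chi_ge0[of L N x] by simp
    qed
  qed
  have lim: "(\<lambda>n. LINT x|lborel. b n x * \<eta> x) \<longlonglongrightarrow> (LINT x|M. \<eta> x)"
  proof (rule LIMSEQ_I)
    fix r :: real assume r: "r > 0"
    define c where "c = \<alpha> * L"
    have c0: "c > 0" unfolding c_def using Lpos apos by simp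
    obtain N1 where N1: "\<forall>N\<ge>N1. norm (P N - s) < r / (3 * c)"
      using LIMSEQ_D[OF PN, of "r / (3 * c)"] r c0 by auto
    obtain N2 where N2: "\<forall>N\<ge>N2. norm ((LINT x|M. \<bar>\<eta> x\<bar> * chi L N x) - (LINT x|M. \<bar>\<eta> x\<bar>)) < r / 3"
      using LIMSEQ_D[OF Mlim, of "r / 3"] r by auto
    define N where "N = max N1 N2"
    have "\<bar>P N - s\<bar> < r / (3 * c)" using N1 unfolding N_def by auto
    then have "s - P N < r / (3 * c)" by linarith
    then have "c * (s - P N) < c * (r / (3 * c))" using c0 by (rule mult_strict_left_mono)
    moreover have "c * (r / (3 * c)) = r / 3" using c0 by (simp add: field_simps)
    ultimately have "c * (s - P N) < r / 3" by simp
    then have tailr: "\<alpha> * L * (s - P N) < r / 3" unfolding c_def .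
    have Mr: "\<bar>(LINT x|M. \<bar>\<eta> x\<bar> * chi L N x) - (LINT x|M. \<bar>\<eta> x\<bar>)\<bar> < r / 3"
      using N2 unfolding N_def by auto
    obtain n0 where n0: "\<forall>n\<ge>n0. norm ((LINT x|lborel. b n x * (\<eta> x * chi L N x)) - (LINT x|M. \<eta> x * chi L N x)) < r / 3"
      using LIMSEQ_D[OF convB[of N, THEN conjunct2], of "r / 3"] r by auto
    show "\<exists>no. \<forall>n\<ge>no. norm ((LINT x|lborel. b n x * \<eta> x) - (LINT x|M. \<eta> x)) < r"
    proof (intro exI[of _ n0] allI impI)
      fix n assume n: "n0 \<le> n"
      have e1: "\<bar>(LINT x|lborel. b n x * \<eta> x) - (LINT x|lborel. b n x * (\<eta> x * chi L N x))\<bar>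
           \<le> (LINT x|lborel. b n x * \<bar>\<eta> x\<bar> * indicator (T N) x)"
      proof (rule int_diff_bound)
        show "integrable lborel (\<lambda>x. b n x * \<eta> x)" using bint by blast
        show "integrable lborel (\<lambda>x. b n x * (\<eta> x * chi L N x))"
          by (rule bint_csupp[OF Lpos apos bL sM ws csupp_chi[OF \<eta>c]])
        show "integrable lborel (\<lambda>x. b n x * \<bar>\<eta> x\<bar> * indicator (T N) x)" by (rule int_T)
        fix x
        have eq: "\<bar>b n x * \<eta> x - b n x * (\<eta> x * chi L N x)\<bar> = b n x * \<bar>\<eta> x\<bar> * (1 - chi L N x)"
        proof -
          have "b n x * \<eta> x - b n x * (\<eta> x * chi L N x) = (b n x * \<eta> x) * (1 - chi L N x)"
            by (simp add: algebra_simps)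
          also have "\<bar>\<dots>\<bar> = b n x * \<bar>\<eta> x\<bar> * (1 - chi L N x)"
            using bnn[of n x] chi_le1[of L N x] by (simp add: abs_mult)
          finally show ?thesis .
        qed
        show "\<bar>b n x * \<eta> x - b n x * (\<eta> x * chi L N x)\<bar> \<le> b n x * \<bar>\<eta> x\<bar> * indicator (T N) x"
        proof (cases "x \<in> T N")
          case True
          have "b n x * \<bar>\<eta> x\<bar> * (1 - chi L N x) \<le> b n x * \<bar>\<eta> x\<bar> * 1"
            using bnn[of n x] chi_ge0[of L N x] by (intro mult_left_mono) auto
          then show ?thesis using True eq by simp
        next
          case False
          then have "\<bar>x\<bar> \<le> real N * L" unfolding T_def by auto
          then show ?thesis using eq False by (simp add: chi_one)
        qed
      qed
      have e2: "\<bar>(LINT x|lborel. b n x * (\<eta> x * chi L N x)) - (LINT x|M. \<eta> x * chi L N x)\<bar> < r / 3"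
        using n0 n by auto
      have chiM: "integrable M (\<lambda>x. \<eta> x * chi L N x)" using convB[of N] by blast
      have achiM: "integrable M (\<lambda>x. \<bar>\<eta> x\<bar> * chi L N x)" using convA[of N] by blast
      have e3: "\<bar>(LINT x|M. \<eta> x * chi L N x) - (LINT x|M. \<eta> x)\<bar> \<le> (LINT x|M. \<bar>\<eta> x\<bar> - \<bar>\<eta> x\<bar> * chi L N x)"
      proof (rule int_diff_bound[OF chiM \<eta>int])
        show "integrable M (\<lambda>x. \<bar>\<eta> x\<bar> - \<bar>\<eta> x\<bar> * chi L N x)"
          by (rule Bochner_Integration.integrable_diff[OF absint achiM])
        fix x
        have "\<eta> x * chi L N x - \<eta> x = \<eta> x * (chi L N x - 1)" by (simp add: algebra_simps)
        then have "\<bar>\<eta> x * chi L N x - \<eta> x\<bar> = \<bar>\<eta> x\<bar> * (1 - chi L N x)"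
          using chi_le1[of L N x] by (simp add: abs_mult)
        then show "\<bar>\<eta> x * chi L N x - \<eta> x\<bar> \<le> \<bar>\<eta> x\<bar> - \<bar>\<eta> x\<bar> * chi L N x"
          by (simp add: algebra_simps)
      qed
      have e3': "(LINT x|M. \<bar>\<eta> x\<bar> - \<bar>\<eta> x\<bar> * chi L N x) = (LINT x|M. \<bar>\<eta> x\<bar>) - (LINT x|M. \<bar>\<eta> x\<bar> * chi L N x)"
        by (rule Bochner_Integration.integral_diff[OF absint achiM])
      show "norm ((LINT x|lborel. b n x * \<eta> x) - (LINT x|M. \<eta> x)) < r"
        unfolding real_norm_def using e1 e2 e3 e3' Mr tail[of n N] tailr by linarith
    qed
  qed

  show ?thesis using \<eta>int bint lim absbound unfolding Sk_eq s_def by blast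
qed


end
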